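(* For all integers $r,k\ge2$, the Milnor number $M_k^r=rN_k^r-N_{k+1}^r$ is positive (equivalently $N_{k+1}^r<rN_k^r$), except when $r=2$ and $k\in\{2,4,6\}$.
   Context: $N_k^r=\frac1k\sum_{d\mid k}\mu(d)\,r^{k/d}$ (Witt's formula for the number of basic commutators of length $k$ in $r$ variables), where $\mu$ is the Möbius function: $\mu(d)=1$ if $d=1$ or $d$ is a product of an even number of distinct primes, $\mu(d)=-1$ if $d$ is a product of an odd number of distinct primes, and $\mu(d)=0$ otherwise. *)

theory Defs
  imports "HOL-Computational_Algebra.Computational_Algebra"
begin

definition mu :: "nat \<Rightarrow> int" where
  "mu d = (if d > 0 \<and> squarefree d then (-1) ^ card (prime_factors d) else 0)"

definition witt_N :: "nat \<Rightarrow> nat \<Rightarrow> real" where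
  "witt_N k r = (1 / real k) * (\<Sum>d \<in> {d. d dvd k}. real_of_int (mu d) * real r ^ (k div d))"

definition milnor_M :: "nat \<Rightarrow> nat \<Rightarrow> real" where
  "milnor_M k r = real r * witt_N k r - witt_N (k + 1) r"

end

theory Submission imports Defs begin

definition W :: "nat \<Rightarrow> nat \<Rightarrow> real" where
  "W k r = (\<Sum>d \<in> {d. d dvd k}. real_of_int (mu d) * real r ^ (k div d))"

lemma witt_W: "witt_N k r = W k r / real k"
  by (simp add: witt_N_def W_def)

lemma mu_1: "mu 1 = 1"
  by (simp add: mu_def)

lemma mu_Suc0: "mu (Suc 0) = 1"
  by (simp add: mu_def)

lemma mu_prime: "prime p \<Longrightarrow> mu p = -1"
  by (simp add: mu_def prime_gt_0_nat squarefree_prime prime_prime_factors)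

lemma mu_pq: "prime p \<Longrightarrow> prime q \<Longrightarrow> p \<noteq> q \<Longrightarrow> mu (p*q) = 1"
proof -
  assume p: "prime p" and q: "prime q" and pq: "p \<noteq> q"
  have c: "coprime p q" using p q pq by (simp add: primes_coprime)
  have sq: "squarefree (p*q)" using c p q by (simp add: squarefree_mult_coprime squarefree_prime)
  have pf: "prime_factors (p*q) = {p,q}" using p q
    by (auto simp add: prime_factors_product prime_gt_0_nat prime_prime_factors)
  show ?thesis using sq pf pq p q by (simp add: mu_def prime_gt_0_nat)
qed

lemma mu_sq: "prime p \<Longrightarrow> p*p dvd n \<Longrightarrow> mu n = 0"
proof -
  assume p: "prime p" and d: "p*p dvd n"
  have "\<not> squarefree n"
  proof
    assume "squarefree n"
    then have "is_unit p" using d by (simp add: squarefree_def power2_eq_square)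
    then show False using p by simp
  qed
  then show ?thesis by (simp add: mu_def)
qed

lemma mu_abs: "\<bar>mu d\<bar> \<le> 1"
  by (simp add: mu_def abs_mult power_abs)

lemma divs2: "{d. d dvd (2::nat)} = {1,2}"
proof (rule set_eqI, rule iffI)
  fix d assume "d \<in> {d. d dvd (2::nat)}"
  then have "d dvd 2" by simp
  moreover then have "d \<le> 2" by (rule dvd_imp_le) simp
  then have "d=0 \<or> d=1 \<or> d=2" by presburger
  ultimately show "d \<in> {1,2}" by auto
qed auto

lemma divs3: "{d. d dvd (3::nat)} = {1,3}"
proof (rule set_eqI, rule iffI)
  fix d assume "d \<in> {d. d dvd (3::nat)}"
  then have "d dvd 3" by simp
  moreover then have "d \<le> 3" by (rule dvd_imp_le) simp
  then have "d=0 \<or> d=1 \<or> d=2 \<or> d=3" by presburger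
  ultimately show "d \<in> {1,3}" by auto
qed auto

lemma divs4: "{d. d dvd (4::nat)} = {1,2,4}"
proof (rule set_eqI, rule iffI)
  fix d assume "d \<in> {d. d dvd (4::nat)}"
  then have "d dvd 4" by simp
  moreover then have "d \<le> 4" by (rule dvd_imp_le) simp
  then have "d=0 \<or> d=1 \<or> d=2 \<or> d=3 \<or> d=4" by presburger
  ultimately show "d \<in> {1,2,4}" by auto
qed auto

lemma divs5: "{d. d dvd (5::nat)} = {1,5}"
proof (rule set_eqI, rule iffI)
  fix d assume "d \<in> {d. d dvd (5::nat)}"
  then have "d dvd 5" by simp
  moreover then have "d \<le> 5" by (rule dvd_imp_le) simp
  then have "d=0 \<or> d=1 \<or> d=2 \<or> d=3 \<or> d=4 \<or> d=5" by presburger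
  ultimately show "d \<in> {1,5}" by auto
qed auto

lemma divs6: "{d. d dvd (6::nat)} = {1,2,3,6}"
proof (rule set_eqI, rule iffI)
  fix d assume "d \<in> {d. d dvd (6::nat)}"
  then have "d dvd 6" by simp
  moreover then have "d \<le> 6" by (rule dvd_imp_le) simp
  then have "d=0 \<or> d=1 \<or> d=2 \<or> d=3 \<or> d=4 \<or> d=5 \<or> d=6" by presburger
  ultimately show "d \<in> {1,2,3,6}" by auto
qed auto

lemma divs7: "{d. d dvd (7::nat)} = {1,7}"
proof (rule set_eqI, rule iffI)
  fix d assume "d \<in> {d. d dvd (7::nat)}"
  then have "d dvd 7" by simp
  moreover then have "d \<le> 7" by (rule dvd_imp_le) simp
  then have "d=0 \<or> d=1 \<or> d=2 \<or> d=3 \<or> d=4 \<or> d=5 \<or> d=6 \<or> d=7" by presburger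
  ultimately show "d \<in> {1,7}" by auto
qed auto

lemma divs8: "{d. d dvd (8::nat)} = {1,2,4,8}"
proof (rule set_eqI, rule iffI)
  fix d assume "d \<in> {d. d dvd (8::nat)}"
  then have "d dvd 8" by simp
  moreover then have "d \<le> 8" by (rule dvd_imp_le) simp
  then have "d=0 \<or> d=1 \<or> d=2 \<or> d=3 \<or> d=4 \<or> d=5 \<or> d=6 \<or> d=7 \<or> d=8" by presburger
  ultimately show "d \<in> {1,2,4,8}" by auto
qed auto

lemma divs9: "{d. d dvd (9::nat)} = {1,3,9}"
proof (rule set_eqI, rule iffI)
  fix d assume "d \<in> {d. d dvd (9::nat)}"
  then have "d dvd 9" by simp
  moreover then have "d \<le> 9" by (rule dvd_imp_le) simp
  then have "d=0 \<or> d=1 \<or> d=2 \<or> d=3 \<or> d=4 \<or> d=5 \<or> d=6 \<or> d=7 \<or> d=8 \<or> d=9" by presburger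
  ultimately show "d \<in> {1,3,9}" by auto
qed auto

lemma divs10: "{d. d dvd (10::nat)} = {1,2,5,10}"
proof (rule set_eqI, rule iffI)
  fix d assume "d \<in> {d. d dvd (10::nat)}"
  then have "d dvd 10" by simp
  moreover then have "d \<le> 10" by (rule dvd_imp_le) simp
  then have "d=0 \<or> d=1 \<or> d=2 \<or> d=3 \<or> d=4 \<or> d=5 \<or> d=6 \<or> d=7 \<or> d=8 \<or> d=9 \<or> d=10" by presburger
  ultimately show "d \<in> {1,2,5,10}" by auto
qed auto

lemma divs11: "{d. d dvd (11::nat)} = {1,11}"
proof (rule set_eqI, rule iffI)
  fix d assume "d \<in> {d. d dvd (11::nat)}"
  then have "d dvd 11" by simp
  moreover then have "d \<le> 11" by (rule dvd_imp_le) simp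
  then have "d=0 \<or> d=1 \<or> d=2 \<or> d=3 \<or> d=4 \<or> d=5 \<or> d=6 \<or> d=7 \<or> d=8 \<or> d=9 \<or> d=10 \<or> d=11" by presburger
  ultimately show "d \<in> {1,11}" by auto
qed auto

lemma prime2: "prime (2::nat)"
  unfolding prime_nat_iff
proof (intro conjI allI impI)
  fix m assume "m dvd (2::nat)"
  moreover then have "m \<le> 2" by (rule dvd_imp_le) simp
  then have "m=0 \<or> m=1 \<or> m=2" by presburger
  ultimately show "m = 1 \<or> m = 2" by auto
qed simp

lemma prime3: "prime (3::nat)"
  unfolding prime_nat_iff
proof (intro conjI allI impI)
  fix m assume "m dvd (3::nat)"
  moreover then have "m \<le> 3" by (rule dvd_imp_le) simp
  then have "m=0 \<or> m=1 \<or> m=2 \<or> m=3" by presburger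
  ultimately show "m = 1 \<or> m = 3" by auto
qed simp

lemma prime5: "prime (5::nat)"
  unfolding prime_nat_iff
proof (intro conjI allI impI)
  fix m assume "m dvd (5::nat)"
  moreover then have "m \<le> 5" by (rule dvd_imp_le) simp
  then have "m=0 \<or> m=1 \<or> m=2 \<or> m=3 \<or> m=4 \<or> m=5" by presburger
  ultimately show "m = 1 \<or> m = 5" by auto
qed simp

lemma prime7: "prime (7::nat)"
  unfolding prime_nat_iff
proof (intro conjI allI impI)
  fix m assume "m dvd (7::nat)"
  moreover then have "m \<le> 7" by (rule dvd_imp_le) simp
  then have "m=0 \<or> m=1 \<or> m=2 \<or> m=3 \<or> m=4 \<or> m=5 \<or> m=6 \<or> m=7" by presburger
  ultimately show "m = 1 \<or> m = 7" by auto
qed simp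

lemma prime11: "prime (11::nat)"
  unfolding prime_nat_iff
proof (intro conjI allI impI)
  fix m assume "m dvd (11::nat)"
  moreover then have "m \<le> 11" by (rule dvd_imp_le) simp
  then have "m=0 \<or> m=1 \<or> m=2 \<or> m=3 \<or> m=4 \<or> m=5 \<or> m=6 \<or> m=7 \<or> m=8 \<or> m=9 \<or> m=10 \<or> m=11" by presburger
  ultimately show "m = 1 \<or> m = 11" by auto
qed simp
lemmas mu_simps = mu_1 mu_Suc0 mu_prime[OF prime2] mu_prime[OF prime3] mu_prime[OF prime5]
  mu_prime[OF prime7] mu_prime[OF prime11]
  mu_pq[OF prime2 prime3, simplified] mu_pq[OF prime2 prime5, simplified]
  mu_sq[OF prime2, of 4, simplified] mu_sq[OF prime2, of 8, simplified]
  mu_sq[OF prime3, of 9, simplified]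

lemma W2: "W 2 r = real r ^ 2 - real r ^ 1"
  by (simp add: W_def divs2 mu_simps)

lemma W3: "W 3 r = real r ^ 3 - real r ^ 1"
  by (simp add: W_def divs3 mu_simps)

lemma W4: "W 4 r = real r ^ 4 - real r ^ 2"
  by (simp add: W_def divs4 mu_simps)

lemma W5: "W 5 r = real r ^ 5 - real r ^ 1"
  by (simp add: W_def divs5 mu_simps)

lemma W6: "W 6 r = real r ^ 6 - real r ^ 3 - real r ^ 2 + real r ^ 1"
  by (simp add: W_def divs6 mu_simps)

lemma W7: "W 7 r = real r ^ 7 - real r ^ 1"
  by (simp add: W_def divs7 mu_simps)

lemma W8: "W 8 r = real r ^ 8 - real r ^ 4"
  by (simp add: W_def divs8 mu_simps)

lemma W9: "W 9 r = real r ^ 9 - real r ^ 3"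
  by (simp add: W_def divs9 mu_simps)

lemma W10: "W 10 r = real r ^ 10 - real r ^ 5 - real r ^ 2 + real r ^ 1"
  by (simp add: W_def divs10 mu_simps)

lemma W11: "W 11 r = real r ^ 11 - real r ^ 1"
  by (simp add: W_def divs11 mu_simps)
lemma geom_bound:
  fixes x :: real assumes "x \<ge> 2"
  shows "(\<Sum>j=1..m. x ^ j) \<le> 2 * x ^ m"
proof (induction m)
  case 0 then show ?case by simp
next
  case (Suc m)
  have "(\<Sum>j=1..Suc m. x ^ j) = (\<Sum>j=1..m. x ^ j) + x ^ Suc m" by simp
  also have "\<dots> \<le> 2 * x ^ m + x ^ Suc m" using Suc by simp
  also have "2 * x ^ m \<le> x ^ Suc m"
    using assms by (simp add: mult_right_mono)
  then have "2 * x ^ m + x ^ Suc m \<le> 2 * x ^ Suc m" by simp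
  finally show ?case .
qed

lemma W_bound:
  assumes k: "k > 0" and r: "r \<ge> 2"
  shows "\<bar>W k r - real r ^ k\<bar> \<le> 2 * real r ^ (k div 2)"
proof -
  define D where "D = {d. d dvd k}"
  have fin: "finite D" unfolding D_def using k by (simp add: finite_divisors_nat)
  have one: "1 \<in> D" unfolding D_def by simp
  define g where "g = (\<lambda>d. k div d)"
  have W_split: "W k r = real r ^ k + (\<Sum>d\<in>D-{1}. real_of_int (mu d) * real r ^ (k div d))"
    unfolding W_def D_def[symmetric] using sum.remove[OF fin one, of "\<lambda>d. real_of_int (mu d) * real r ^ (k div d)"] by (simp add: mu_1 mu_Suc0)
  have "\<bar>\<Sum>d\<in>D-{1}. real_of_int (mu d) * real r ^ (k div d)\<bar>
      \<le> (\<Sum>d\<in>D-{1}. \<bar>real_of_int (mu d) * real r ^ (k div d)\<bar>)"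
    by (rule sum_abs)
  also have "\<dots> \<le> (\<Sum>d\<in>D-{1}. real r ^ g d)"
  proof (rule sum_mono)
    fix d assume "d \<in> D - {1}"
    have "\<bar>real_of_int (mu d)\<bar> \<le> 1" using mu_abs[of d] by linarith
    then show "\<bar>real_of_int (mu d) * real r ^ (k div d)\<bar> \<le> real r ^ g d"
      unfolding g_def by (simp add: abs_mult mult_left_le_one_le)
  qed
  also have "\<dots> = (\<Sum>j\<in>g ` (D-{1}). real r ^ j)"
  proof (rule sum.reindex[symmetric, unfolded comp_def])
    show "inj_on g (D - {1})"
    proof (rule inj_onI)
      fix a b assume a: "a \<in> D - {1}" and b: "b \<in> D - {1}" and e: "g a = g b"
      have "a dvd k" "b dvd k" using a b unfolding D_def by auto
      then have "k = a * g a" "k = b * g b" unfolding g_def by simp_all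
      moreover have "g a > 0" using \<open>a dvd k\<close> k unfolding g_def
        by (metis dvd_div_eq_0_iff gr0I less_numeral_extra(3))
      ultimately show "a = b" using e by (metis mult_right_cancel less_not_refl2)
    qed
  qed
  also have "\<dots> \<le> (\<Sum>j=1..k div 2. real r ^ j)"
  proof (rule sum_mono2)
    show "g ` (D - {1}) \<subseteq> {1..k div 2}"
    proof
      fix j assume "j \<in> g ` (D - {1})"
      then obtain d where d: "d \<in> D" "d \<noteq> 1" and j: "j = k div d" unfolding g_def by auto
      have dk: "d dvd k" using d unfolding D_def by simp
      have "d > 0" using dk k by (metis dvd_0_left_iff gr0I less_numeral_extra(3))
      then have d2: "d \<ge> 2" using d by simp
      have "d \<le> k" using dk k by (simp add: dvd_imp_le)
      have "j \<ge> 1" using \<open>d \<le> k\<close> \<open>d > 0\<close> j using div_greater_zero_iff[of k d] by simp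
      moreover have "j \<le> k div 2" using d2 j by (simp add: div_le_mono2)
      ultimately show "j \<in> {1..k div 2}" by simp
    qed
  qed auto
  also have "\<dots> \<le> 2 * real r ^ (k div 2)" using r by (intro geom_bound) simp
  finally show ?thesis using W_split by simp
qed

lemma exp_big:
  fixes r k :: nat
  assumes "r \<ge> 2" "k \<ge> 3" "k \<ge> 11 \<or> (r \<ge> 3 \<and> k \<ge> 5) \<or> r \<ge> 5"
  shows "r ^ (k - k div 2) > 4 * k + 2"
proof -
  define c where "c = k - k div 2"
  have kc: "4 * k + 2 \<le> 8 * c + 2" unfolding c_def by linarith
  have A: "2 ^ c > 8 * c + 2" if "c \<ge> 6" for c :: nat
    using that
  proof (induction c rule: dec_induct)
    case base then show ?case by simp
  next
    case (step n) then show ?case by simp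
  qed
  have B: "3 ^ c > 8 * c + 2" if "c \<ge> 3" for c :: nat
    using that
  proof (induction c rule: dec_induct)
    case base then show ?case by simp
  next
    case (step n) then show ?case by simp
  qed
  consider "k \<ge> 11" | "r \<ge> 3" "k \<ge> 5" | "r \<ge> 5" "k < 5" using assms by linarith
  then show ?thesis
  proof cases
    case 1
    then have "c \<ge> 6" unfolding c_def by linarith
    then have "2 ^ c > 8 * c + 2" by (rule A)
    moreover have "2 ^ c \<le> r ^ c" using assms by (simp add: power_mono)
    ultimately show ?thesis using kc unfolding c_def by linarith
  next
    case 2
    then have "c \<ge> 3" unfolding c_def by linarith
    then have "3 ^ c > 8 * c + 2" by (rule B)
    moreover have "3 ^ c \<le> r ^ c" using 2 by (simp add: power_mono)
    ultimately show ?thesis using kc unfolding c_def by linarith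
  next
    case 3
    have "c \<ge> 2" unfolding c_def using assms by linarith
    have "r ^ 2 \<le> r ^ c" using \<open>c \<ge> 2\<close> assms by (simp add: power_increasing)
    moreover have "25 \<le> r ^ 2" using 3 power_mono[of 5 r 2] by simp
    moreover have "4 * k + 2 < 25" using 3 assms(2) by linarith
    ultimately show ?thesis unfolding c_def by linarith
  qed
qed
lemma large_case:
  fixes r k :: nat
  assumes r: "r \<ge> 2" and k: "k \<ge> 2" and e: "r ^ (k - k div 2) > 4 * k + 2"
  shows "milnor_M k r > 0"
proof -
  define x where "x = real r"
  define m where "m = k div 2"
  define a where "a = W k r"
  define b where "b = W (k+1) r"
  define P where "P = x ^ (m+1)"
  define Q where "Q = x ^ (k - m)"
  have x2: "x \<ge> 2" unfolding x_def using r by simp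
  have P0: "P > 0" unfolding P_def using x2 by simp
  have h1: "\<bar>a - x ^ k\<bar> \<le> 2 * x ^ m" unfolding a_def x_def m_def
    using W_bound[of k r] k r by simp
  have h2': "\<bar>b - x ^ (k+1)\<bar> \<le> 2 * x ^ ((k+1) div 2)" unfolding b_def x_def
    using W_bound[of "k+1" r] r by simp
  have "x ^ ((k+1) div 2) \<le> x ^ (m+1)" unfolding m_def
    using x2 by (intro power_increasing) auto
  then have h2: "\<bar>b - x ^ (k+1)\<bar> \<le> 2 * P" using h2' unfolding P_def by linarith
  have h3: "real (4 * k + 2) < Q" unfolding Q_def x_def m_def
    using e by (metis of_nat_less_iff of_nat_power)
  have mk: "m + 1 + (k - m) = k + 1" unfolding m_def by linarith
  have key: "x ^ (k+1) = P * Q" unfolding P_def Q_def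
    by (metis mk power_add)
  have xk: "x * x ^ k = x ^ (k+1)" by simp
  have xm: "x * x ^ m = P" unfolding P_def by simp
  have A: "x * a \<ge> x ^ (k+1) - 2 * P"
  proof -
    have "a \<ge> x ^ k - 2 * x ^ m" using h1 by linarith
    then have "x * a \<ge> x * (x ^ k - 2 * x ^ m)" using x2 by (intro mult_left_mono) auto
    moreover have "x * (x ^ k - 2 * x ^ m) = x ^ (k+1) - 2 * P" unfolding P_def
      by (simp add: algebra_simps)
    ultimately show ?thesis by linarith
  qed
  have B: "b \<le> x ^ (k+1) + 2 * P" using h2 by linarith
  have D: "(real k + 1) * (x * a) - real k * b \<ge> P * Q - (4 * real k + 2) * P"
  proof -
    have "(real k + 1) * (x * a) \<ge> (real k + 1) * (x ^ (k+1) - 2 * P)"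
      using A by (intro mult_left_mono) auto
    moreover have "real k * b \<le> real k * (x ^ (k+1) + 2 * P)"
      using B by (intro mult_left_mono) auto
    ultimately show ?thesis using key by (simp add: algebra_simps)
  qed
  have "P * Q - (4 * real k + 2) * P = P * (Q - (4 * real k + 2))" by (simp add: algebra_simps)
  also have "\<dots> > 0" using P0 h3 by simp
  finally have Dpos: "(real k + 1) * (x * a) - real k * b > 0" using D by linarith
  have "milnor_M k r = ((real k + 1) * (x * a) - real k * b) / (real k * (real k + 1))"
    unfolding milnor_M_def witt_W a_def b_def x_def using k
    by (simp add: field_simps)
  then show ?thesis using Dpos k by simp
qed

lemma milnor_Mn: "milnor_M k r = real r * (W k r / real k) - W (Suc k) r / real (Suc k)"
  by (simp add: milnor_M_def witt_W)

theorem lemma2p5: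
  fixes r k :: nat
  assumes "r \<ge> 2" and "k \<ge> 2"
  shows "milnor_M k r > 0 \<longleftrightarrow> \<not> (r = 2 \<and> k \<in> {2, 4, 6})"
proof (cases "k = 2")
  case True
  have "milnor_M 2 r = real r * (real r - 1) * (real r - 2) / 6"
    by (simp add: milnor_Mn witt_W W2 W3 field_simps power2_eq_square power3_eq_cube)
  note e = this
  show ?thesis
  proof (cases "r = 2")
    case True2: True
    then show ?thesis using e True by simp
  next
    case False
    then have r3: "real r \<ge> 3" using assms by simp
    then have "real r * (real r - 1) * (real r - 2) > 0" by (simp add: mult_pos_pos)
    then show ?thesis using e True False by simp
  qed
next
  case False
  then have k3: "k \<ge> 3" using assms by linarith
  show ?thesis
  proof (cases "k \<ge> 11 \<or> (r \<ge> 3 \<and> k \<ge> 5) \<or> r \<ge> 5")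
    case True
    have "milnor_M k r > 0" using large_case[OF assms] exp_big[OF assms(1) k3 True] by simp
    moreover have "\<not> (r = 2 \<and> k \<in> {2, 4, 6})" using True k3 by auto
    ultimately show ?thesis by simp
  next
    case False
    have rr: "r = 2 \<or> r = 3 \<or> r = 4" using False assms by linarith
    have kk: "k = 3 \<or> k = 4 \<or> k = 5 \<or> k = 6 \<or> k = 7 \<or> k = 8 \<or> k = 9 \<or> k = 10"
      using False k3 by linarith
    show ?thesis using rr kk False
      by (elim disjE) (simp_all add: milnor_Mn witt_W W3 W4 W5 W6 W7 W8 W9 W10 W11)
  qed
qed
end
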